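(* Let $\nu\in\mathbb{R}$, $n\ge 1$, and let $p_n(\underline{\theta})$ be any function of $\underline{\theta}=(\theta_1,\dots,\theta_n)$ that does not depend on $\underline{l}=(l_1,\dots,l_n)\in\{0,1\}^n$. Then $$K_n(\underline{\theta})=\sum_{l_1=0}^1\cdots\sum_{l_n=0}^1(-1)^{l_1+\dots+l_n}\prod_{1\le i<j\le n}\Big(1+(l_i-l_j)\frac{i\sin\pi\nu}{\sinh\theta_{ij}}\Big)p_n(\underline{\theta})$$ vanishes identically.
   Context: $\theta_{ij}=\theta_i-\theta_j$. *)

theory Defs
  imports "HOL-Analysis.Analysis"
begin

end

theory Submission
  imports Defs "HOL-Computational_Algebra.Polynomial"
begin

definition XX :: "complex \<Rightarrow> (nat \<Rightarrow> complex) \<Rightarrow> nat \<Rightarrow> nat \<Rightarrow> complex" where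
  "XX k w a b = k * w a * w b / ((w a)^2 - (w b)^2)"

definition PP :: "complex \<Rightarrow> (nat \<Rightarrow> complex) \<Rightarrow> nat set \<Rightarrow> nat set \<Rightarrow> complex" where
  "PP k w R T = (\<Prod>a\<in>T. \<Prod>b\<in>R-T. 1 + XX k w a b)"

definition KK :: "complex \<Rightarrow> (nat \<Rightarrow> complex) \<Rightarrow> nat set \<Rightarrow> complex" where
  "KK k w V = (\<Sum>T\<in>Pow V. (-1)^card T * PP k w V T)"

lemma sum_Pow_insert:
  assumes "finite R" "v \<notin> R"
  shows "(\<Sum>T\<in>Pow (insert v R). f T) = (\<Sum>T\<in>Pow R. f T + f (insert v T))"
proof -
  have "(\<Sum>T\<in>Pow (insert v R). f T) = (\<Sum>T\<in>Pow R. f T) + (\<Sum>T\<in>insert v ` Pow R. f T)"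
    unfolding Pow_insert by (rule sum.union_disjoint) (use assms in auto)
  also have "(\<Sum>T\<in>insert v ` Pow R. f T) = (\<Sum>T\<in>Pow R. f (insert v T))"
    by (rule sum.reindex_cong[where l="insert v"]) (use assms in \<open>auto simp: inj_on_def\<close>)
  finally show ?thesis by (simp add: sum.distrib)
qed

lemma PP_insert1:
  assumes "finite R" "v \<notin> R" "T \<subseteq> R"
  shows "PP k w (insert v R) T = PP k w R T * (\<Prod>a\<in>T. 1 + XX k w a v)"
proof -
  have "insert v R - T = insert v (R - T)" using assms by auto
  then show ?thesis unfolding PP_def
    using assms finite_subset[OF assms(3)]
    by (simp add: prod.distrib[symmetric] mult.commute)
qed

lemma PP_insert2:
  assumes "finite R" "v \<notin> R" "T \<subseteq> R"
  shows "PP k w (insert v R) (insert v T) = PP k w R T * (\<Prod>b\<in>R-T. 1 + XX k w v b)"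
proof -
  have "insert v R - insert v T = R - T" using assms by auto
  then show ?thesis unfolding PP_def
    using assms finite_subset[OF assms(3)] by (subst prod.insert) (auto simp: mult.commute)
qed

lemma degree_prod_le2:
  fixes q :: "nat \<Rightarrow> complex poly"
  assumes "finite A" "\<And>b. degree (q b) \<le> 2"
  shows "degree (\<Prod>b\<in>A. q b) \<le> 2 * card A"
  using assms(1)
proof (induction A rule: finite_induct)
  case empty then show ?case by simp
next
  case (insert x F)
  have "degree (\<Prod>b\<in>insert x F. q b) = degree (q x * (\<Prod>b\<in>F. q b))"
    using insert by simp
  also have "\<dots> \<le> degree (q x) + degree (\<Prod>b\<in>F. q b)" by (rule degree_mult_le)
  also have "\<dots> \<le> 2 + 2 * card F" using assms(2)[of x] insert.IH by linarith
  finally show ?case using insert by simp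
qed

lemma XX_fact1:
  assumes "(w a)^2 \<noteq> (w b)^2"
  shows "(1 + XX k w a b) * ((w b)^2 - (w a)^2) = (w b)^2 - (w a)^2 - k * w a * w b"
proof -
  have "(w a)^2 - (w b)^2 \<noteq> 0" using assms by simp
  then show ?thesis unfolding XX_def by (simp add: field_simps)
qed

lemma XX_fact2:
  assumes "(w a)^2 \<noteq> (w b)^2"
  shows "(1 + XX k w a b) * ((w a)^2 - (w b)^2) = (w a)^2 - (w b)^2 + k * w b * w a"
proof -
  have "(w a)^2 - (w b)^2 \<noteq> 0" using assms by simp
  then show ?thesis unfolding XX_def by (simp add: field_simps)
qed

lemma main:
  fixes k :: complex and w :: "nat \<Rightarrow> complex"
  assumes "finite V" "V \<noteq> {}" "\<forall>a\<in>V. w a \<noteq> 0" "\<forall>a\<in>V. \<forall>b\<in>V. a \<noteq> b \<longrightarrow> (w a)^2 \<noteq> (w b)^2"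
  shows "KK k w V = 0"
  using assms
proof (induction "card V" arbitrary: V rule: less_induct)
  case less
  obtain v where v: "v \<in> V" using less.prems by blast
  define R' where "R' = V - {v}"
  have VR: "V = insert v R'" "v \<notin> R'" "finite R'" using v less.prems unfolding R'_def by auto
  have w0: "\<And>a. a \<in> V \<Longrightarrow> w a \<noteq> 0" using less.prems by auto
  have wd: "\<And>a b. a \<in> V \<Longrightarrow> b \<in> V \<Longrightarrow> a \<noteq> b \<Longrightarrow> (w a)^2 \<noteq> (w b)^2" using less.prems by auto
  define e0 :: "complex \<Rightarrow> nat \<Rightarrow> complex" where "e0 x b = x^2 - (w b)^2" for x b
  define ep :: "complex \<Rightarrow> nat \<Rightarrow> complex" where "ep x b = x^2 - (w b)^2 + k * w b * x" for x b
  define em :: "complex \<Rightarrow> nat \<Rightarrow> complex" where "em x b = x^2 - (w b)^2 - k * w b * x" for x b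
  define q0 :: "nat \<Rightarrow> complex poly" where "q0 b = [: - ((w b)^2), 0, 1:]" for b
  define qp :: "nat \<Rightarrow> complex poly" where "qp b = [: - ((w b)^2), k * w b, 1:]" for b
  define qm :: "nat \<Rightarrow> complex poly" where "qm b = [: - ((w b)^2), - (k * w b), 1:]" for b
  have pq: "poly (q0 b) x = e0 x b" "poly (qp b) x = ep x b" "poly (qm b) x = em x b" for b x
    unfolding q0_def qp_def qm_def e0_def ep_def em_def by (simp_all add: algebra_simps power2_eq_square)
  have dq: "degree (q0 b) \<le> 2" "degree (qp b) \<le> 2" "degree (qm b) \<le> 2" for b
    unfolding q0_def qp_def qm_def by simp_all
  define N where "N = (\<Sum>T\<in>Pow R'. smult ((-1)^card T * PP k w R' T)
      (- ((\<Prod>b\<in>R'-T. qp b) * (\<Prod>b\<in>T. q0 b)) + (\<Prod>a\<in>T. qm a) * (\<Prod>b\<in>R'-T. q0 b)))"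
  define g where "g x T = (-1)^card T * PP k w R' T *
      (- ((\<Prod>b\<in>R'-T. ep x b) * (\<Prod>b\<in>T. e0 x b)) + (\<Prod>a\<in>T. em x a) * (\<Prod>b\<in>R'-T. e0 x b))" for x T
  have polyN: "poly N x = (\<Sum>T\<in>Pow R'. g x T)" for x
    unfolding N_def g_def by (simp add: poly_sum poly_prod pq)
  have degN: "degree N \<le> 2 * card R'"
    unfolding N_def
  proof (intro degree_sum_le)
    fix T assume T: "T \<in> Pow R'"
    then have fT: "finite T" "finite (R' - T)" using VR finite_subset by auto
    have "card T \<le> card R'" using T VR by (intro card_mono) auto
    then have cc: "card (R' - T) + card T = card R'" using T fT by (simp add: card_Diff_subset)
    have d1: "degree ((\<Prod>b\<in>R'-T. qp b) * (\<Prod>b\<in>T. q0 b)) \<le> 2 * card R'"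
      using degree_mult_le[of "\<Prod>b\<in>R'-T. qp b" "\<Prod>b\<in>T. q0 b"]
        degree_prod_le2[OF fT(2), of qp, OF dq(2)] degree_prod_le2[OF fT(1), of q0, OF dq(1)] cc by linarith
    have d2: "degree ((\<Prod>b\<in>T. qm b) * (\<Prod>b\<in>R'-T. q0 b)) \<le> 2 * card R'"
      using degree_mult_le[of "\<Prod>b\<in>T. qm b" "\<Prod>b\<in>R'-T. q0 b"]
        degree_prod_le2[OF fT(2), of q0, OF dq(1)] degree_prod_le2[OF fT(1), of qm, OF dq(3)] cc by linarith
    show "degree (smult ((-1)^card T * PP k w R' T)
      (- ((\<Prod>b\<in>R'-T. qp b) * (\<Prod>b\<in>T. q0 b)) + (\<Prod>a\<in>T. qm a) * (\<Prod>b\<in>R'-T. q0 b))) \<le> 2 * card R'"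
      using d1 d2 by (intro order.trans[OF degree_smult_le] degree_add_le) simp_all
  qed (use VR in simp)
  have N0: "poly N 0 = 0"
  proof -
    have "ep 0 = e0 0" "em 0 = e0 0" by (auto simp: fun_eq_iff e0_def ep_def em_def)
    then show ?thesis unfolding polyN g_def by (simp add: mult.commute)
  qed
  have Nw: "poly N (w j) = 0" if j: "j \<in> R'" for j
  proof -
    define R where "R = R' - {j}"
    have RR: "R' = insert j R" "j \<notin> R" "finite R" using j VR unfolding R_def by auto
    have jV: "j \<in> V" using j VR by auto
    have ev: "e0 (w j) j = 0" "ep (w j) j = k * (w j)^2" "em (w j) j = - (k * (w j)^2)"
      unfolding e0_def ep_def em_def by (simp_all add: power2_eq_square)
    have "poly N (w j) = (\<Sum>T\<in>Pow R. g (w j) T + g (w j) (insert j T))"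
      unfolding polyN RR(1) by (rule sum_Pow_insert[OF RR(3,2)])
    also have "\<dots> = 0"
    proof (rule sum.neutral, rule ballI)
      fix T assume T: "T \<in> Pow R"
      then have TR: "T \<subseteq> R" "j \<notin> T" "finite T" "finite (R - T)" "j \<notin> R - T"
        using RR finite_subset by auto
      have TV: "\<And>a. a \<in> R \<Longrightarrow> a \<in> V \<and> a \<noteq> j" using RR VR by auto
      have h1: "PP k w R' T = PP k w R T * (\<Prod>a\<in>T. 1 + XX k w a j)"
        unfolding RR(1) by (rule PP_insert1[OF RR(3,2) TR(1)])
      have h2: "PP k w R' (insert j T) = PP k w R T * (\<Prod>b\<in>R-T. 1 + XX k w j b)"
        unfolding RR(1) by (rule PP_insert2[OF RR(3,2) TR(1)])
      have h3: "R' - T = insert j (R - T)" "R' - insert j T = R - T" using RR TR by auto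
      have h4: "card (insert j T) = Suc (card T)" using TR by simp
      have hA: "(\<Prod>a\<in>T. 1 + XX k w a j) * (\<Prod>a\<in>T. e0 (w j) a) = (\<Prod>a\<in>T. em (w j) a)"
        unfolding prod.distrib[symmetric]
      proof (rule prod.cong[OF refl])
        fix a assume "a \<in> T"
        then have "a \<in> V" "a \<noteq> j" using TV TR by auto
        then show "(1 + XX k w a j) * e0 (w j) a = em (w j) a"
          using XX_fact1[of w a j k] wd[of a j] jV unfolding e0_def em_def by (simp add: mult.commute)
      qed
      have hB: "(\<Prod>b\<in>R-T. 1 + XX k w j b) * (\<Prod>b\<in>R-T. e0 (w j) b) = (\<Prod>b\<in>R-T. ep (w j) b)"
        unfolding prod.distrib[symmetric]
      proof (rule prod.cong[OF refl])
        fix b assume "b \<in> R - T"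
        then have "b \<in> V" "b \<noteq> j" using TV by auto
        then show "(1 + XX k w j b) * e0 (w j) b = ep (w j) b"
          using XX_fact2[of w j b k] wd[of j b] jV unfolding e0_def ep_def by (simp add: mult.commute)
      qed
      show "g (w j) T + g (w j) (insert j T) = 0"
        unfolding g_def h1 h2 h3 h4 using TR
        by (simp add: ev hA[symmetric] hB[symmetric] algebra_simps)
    qed
    finally show ?thesis .
  qed
  have Nmw: "poly N (- w j) = 0" if j: "j \<in> R'" for j
  proof -
    define R where "R = R' - {j}"
    have RR: "R' = insert j R" "j \<notin> R" "finite R" using j VR unfolding R_def by auto
    have jV: "j \<in> V" using j VR by auto
    have ev: "e0 (w j) j = 0" "ep (w j) j = k * (w j)^2" "em (w j) j = - (k * (w j)^2)"
      unfolding e0_def ep_def em_def by (simp_all add: power2_eq_square)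
    have fm: "e0 (- w j) = e0 (w j)" "ep (- w j) = em (w j)" "em (- w j) = ep (w j)"
      by (auto simp: fun_eq_iff e0_def ep_def em_def)
    have "poly N (- w j) = (\<Sum>T\<in>Pow R. g (- w j) T + g (- w j) (insert j T))"
      unfolding polyN RR(1) by (rule sum_Pow_insert[OF RR(3,2)])
    also have "\<dots> = (\<Sum>T\<in>Pow R. (k * (w j)^2 * ((\<Prod>b\<in>R. em (w j) b) - (\<Prod>b\<in>R. ep (w j) b))) *
                         ((-1)^card T * PP k w R T))"
    proof (rule sum.cong[OF refl])
      fix T assume T: "T \<in> Pow R"
      then have TR: "T \<subseteq> R" "j \<notin> T" "finite T" "finite (R - T)" "j \<notin> R - T"
        using RR finite_subset by auto
      have TV: "\<And>a. a \<in> R \<Longrightarrow> a \<in> V \<and> a \<noteq> j" using RR VR by auto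
      have h1: "PP k w R' T = PP k w R T * (\<Prod>a\<in>T. 1 + XX k w a j)"
        unfolding RR(1) by (rule PP_insert1[OF RR(3,2) TR(1)])
      have h2: "PP k w R' (insert j T) = PP k w R T * (\<Prod>b\<in>R-T. 1 + XX k w j b)"
        unfolding RR(1) by (rule PP_insert2[OF RR(3,2) TR(1)])
      have h3: "R' - T = insert j (R - T)" "R' - insert j T = R - T" using RR TR by auto
      have h4: "card (insert j T) = Suc (card T)" using TR by simp
      have hA: "(\<Prod>a\<in>T. 1 + XX k w a j) * (\<Prod>a\<in>T. e0 (w j) a) = (\<Prod>a\<in>T. em (w j) a)"
        unfolding prod.distrib[symmetric]
      proof (rule prod.cong[OF refl])
        fix a assume "a \<in> T"
        then have "a \<in> V" "a \<noteq> j" using TV TR by auto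
        then show "(1 + XX k w a j) * e0 (w j) a = em (w j) a"
          using XX_fact1[of w a j k] wd[of a j] jV unfolding e0_def em_def by (simp add: mult.commute)
      qed
      have hB: "(\<Prod>b\<in>R-T. 1 + XX k w j b) * (\<Prod>b\<in>R-T. e0 (w j) b) = (\<Prod>b\<in>R-T. ep (w j) b)"
        unfolding prod.distrib[symmetric]
      proof (rule prod.cong[OF refl])
        fix b assume "b \<in> R - T"
        then have "b \<in> V" "b \<noteq> j" using TV by auto
        then show "(1 + XX k w j b) * e0 (w j) b = ep (w j) b"
          using XX_fact2[of w j b k] wd[of j b] jV unfolding e0_def ep_def by (simp add: mult.commute)
      qed
      have sp: "(\<Prod>b\<in>R. em (w j) b) = (\<Prod>b\<in>R-T. em (w j) b) * (\<Prod>b\<in>T. em (w j) b)"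
               "(\<Prod>b\<in>R. ep (w j) b) = (\<Prod>b\<in>R-T. ep (w j) b) * (\<Prod>b\<in>T. ep (w j) b)"
        using prod.subset_diff[OF TR(1) RR(3)] by auto
      show "g (- w j) T + g (- w j) (insert j T) = (k * (w j)^2 * ((\<Prod>b\<in>R. em (w j) b) - (\<Prod>b\<in>R. ep (w j) b))) *
                         ((-1)^card T * PP k w R T)"
        unfolding g_def h1 h2 h3 h4 fm sp using TR
        by (simp add: ev hA[symmetric] hB[symmetric] algebra_simps)
    qed
    also have "\<dots> = (k * (w j)^2 * ((\<Prod>b\<in>R. em (w j) b) - (\<Prod>b\<in>R. ep (w j) b))) * KK k w R"
      unfolding KK_def by (simp add: sum_distrib_left)
    also have "\<dots> = 0"
    proof (cases "R = {}")
      case True then show ?thesis by simp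
    next
      case False
      have "card R < card V" using VR RR by (simp add: card_insert_if)
      moreover have "\<forall>a\<in>R. w a \<noteq> 0" "\<forall>a\<in>R. \<forall>b\<in>R. a \<noteq> b \<longrightarrow> (w a)^2 \<noteq> (w b)^2"
        using w0 wd VR RR by auto
      ultimately have "KK k w R = 0" using less.hyps[of R] False RR(3) by blast
      then show ?thesis by simp
    qed
    finally show ?thesis .
  qed
  define A where "A = insert 0 (w ` R' \<union> (\<lambda>j. - w j) ` R')"
  have injw: "inj_on w R'"
    by (rule inj_onI) (metis wd VR(1) insertCI)
  have injm: "inj_on (\<lambda>j. - w j) R'"
    by (rule inj_onI) (metis wd VR(1) insertCI neg_equal_iff_equal)
  have disj: "w ` R' \<inter> (\<lambda>j. - w j) ` R' = {}"
  proof (rule ccontr)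
    assume "w ` R' \<inter> (\<lambda>j. - w j) ` R' \<noteq> {}"
    then obtain a b where ab: "a \<in> R'" "b \<in> R'" "w a = - w b" by auto
    then have "(w a)^2 = (w b)^2" by simp
    then have "a = b" using wd ab VR by blast
    then show False using ab w0 VR by auto
  qed
  have zn: "0 \<notin> w ` R' \<union> (\<lambda>j. - w j) ` R'" using w0 VR by auto
  have cardA: "card A = Suc (2 * card R')"
    unfolding A_def using VR(3) zn disj injw injm
    by (simp add: card_insert_if card_Un_disjoint card_image)
  have "N = 0"
  proof (rule poly_eqI_degree[of A])
    fix x assume "x \<in> A"
    then show "poly N x = poly 0 x" unfolding A_def using N0 Nw Nmw by auto
  qed (use cardA degN in auto)
  have "poly N (w v) = (\<Prod>b\<in>R'. e0 (w v) b) * KK k w V"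
  proof -
    have "KK k w V = (\<Sum>T\<in>Pow R'. (-1)^card T * PP k w V T + (-1)^card (insert v T) * PP k w V (insert v T))"
      unfolding KK_def VR(1) by (rule sum_Pow_insert[OF VR(3,2)])
    then have "(\<Prod>b\<in>R'. e0 (w v) b) * KK k w V = (\<Sum>T\<in>Pow R'. (\<Prod>b\<in>R'. e0 (w v) b) *
       ((-1)^card T * PP k w V T + (-1)^card (insert v T) * PP k w V (insert v T)))"
      by (simp add: sum_distrib_left)
    also have "\<dots> = (\<Sum>T\<in>Pow R'. g (w v) T)"
    proof (rule sum.cong[OF refl])
      fix T assume T: "T \<in> Pow R'"
      then have TR: "T \<subseteq> R'" "v \<notin> T" "finite T" "finite (R' - T)"
        using VR finite_subset by auto
      have TV: "\<And>a. a \<in> R' \<Longrightarrow> a \<in> V \<and> a \<noteq> v" using VR by auto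
      have h1: "PP k w V T = PP k w R' T * (\<Prod>a\<in>T. 1 + XX k w a v)"
        unfolding VR(1) by (rule PP_insert1[OF VR(3,2) TR(1)])
      have h2: "PP k w V (insert v T) = PP k w R' T * (\<Prod>b\<in>R'-T. 1 + XX k w v b)"
        unfolding VR(1) by (rule PP_insert2[OF VR(3,2) TR(1)])
      have h4: "card (insert v T) = Suc (card T)" using TR by simp
      have hA: "(\<Prod>a\<in>T. 1 + XX k w a v) * (\<Prod>a\<in>T. e0 (w v) a) = (\<Prod>a\<in>T. em (w v) a)"
        unfolding prod.distrib[symmetric]
      proof (rule prod.cong[OF refl])
        fix a assume "a \<in> T"
        then have "a \<in> V" "a \<noteq> v" using TV TR by auto
        then show "(1 + XX k w a v) * e0 (w v) a = em (w v) a"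
          using XX_fact1[of w a v k] wd[of a v] v unfolding e0_def em_def by (simp add: mult.commute)
      qed
      have hB: "(\<Prod>b\<in>R'-T. 1 + XX k w v b) * (\<Prod>b\<in>R'-T. e0 (w v) b) = (\<Prod>b\<in>R'-T. ep (w v) b)"
        unfolding prod.distrib[symmetric]
      proof (rule prod.cong[OF refl])
        fix b assume "b \<in> R' - T"
        then have "b \<in> V" "b \<noteq> v" using TV by auto
        then show "(1 + XX k w v b) * e0 (w v) b = ep (w v) b"
          using XX_fact2[of w v b k] wd[of v b] v unfolding e0_def ep_def by (simp add: mult.commute)
      qed
      have sp: "(\<Prod>b\<in>R'. e0 (w v) b) = (\<Prod>b\<in>R'-T. e0 (w v) b) * (\<Prod>b\<in>T. e0 (w v) b)"
        using prod.subset_diff[OF TR(1) VR(3)] by auto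
      show "(\<Prod>b\<in>R'. e0 (w v) b) *
       ((-1)^card T * PP k w V T + (-1)^card (insert v T) * PP k w V (insert v T)) = g (w v) T"
        unfolding g_def h1 h2 h4 sp
        by (simp add: hA[symmetric] hB[symmetric] algebra_simps)
    qed
    finally show ?thesis unfolding polyN by simp
  qed
  moreover have "(\<Prod>b\<in>R'. e0 (w v) b) \<noteq> 0"
    using VR wd v unfolding e0_def by (auto simp: prod_zero_iff)
  ultimately show ?case using \<open>N = 0\<close> by simp
qed


lemma sinh_exp_diff:
  fixes a b :: complex
  shows "sinh (a - b) = ((exp a)^2 - (exp b)^2) / (2 * exp a * exp b)"
  unfolding sinh_def exp_diff
  by (simp add: scaleR_conv_of_real exp_minus field_simps power2_eq_square exp_diff)

lemma c_sinh_XX: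
  fixes c :: complex and \<theta> :: "nat \<Rightarrow> complex"
  shows "c / sinh (\<theta> a - \<theta> b) = XX (2 * c) (\<lambda>k. exp (\<theta> k)) a b"
proof (cases "(exp (\<theta> a))^2 = (exp (\<theta> b))^2")
  case True then show ?thesis unfolding sinh_exp_diff XX_def by simp
next
  case False
  then have "(exp (\<theta> a))^2 - (exp (\<theta> b))^2 \<noteq> 0" by simp
  then show ?thesis unfolding sinh_exp_diff XX_def by (simp add: field_simps)
qed

lemma XX_antisym: "XX k w b a = - XX k w a b"
proof -
  have "(w b)^2 - (w a)^2 = - ((w a)^2 - (w b)^2)" by simp
  then show ?thesis unfolding XX_def by (metis (no_types, lifting) minus_divide_right mult.commute mult.assoc)
qed

lemma PP_pairs:
  fixes l :: "nat \<Rightarrow> nat" and X :: "nat \<Rightarrow> nat \<Rightarrow> complex"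
  assumes l01: "\<And>k. k \<in> {1..n} \<Longrightarrow> l k \<in> {0, 1}"
    and anti: "\<And>a b. X b a = - X a b"
  shows "(\<Prod>(i, j) \<in> {(i, j). 1 \<le> i \<and> i < j \<and> j \<le> n}. 1 + (of_int (int (l i) - int (l j))) * X i j)
       = (\<Prod>a\<in>{k\<in>{1..n}. l k = 1}. \<Prod>b\<in>{1..n}-{k\<in>{1..n}. l k = 1}. 1 + X a b)"
    (is "?L = ?R")
proof -
  define V where "V = {1..n::nat}"
  define S where "S = {k\<in>V. l k = 1}"
  define D where "D = {(i, j). 1 \<le> i \<and> i < j \<and> j \<le> (n::nat)}"
  define \<phi> where "\<phi> a b = (if a \<in> S \<and> b \<notin> S then 1 + X a b else 1)" for a b
  have fV: "finite V" unfolding V_def by simp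
  have DV: "D \<subseteq> V \<times> V" unfolding D_def V_def by auto
  have fD: "finite D" using DV fV finite_subset by blast
  have SV: "S \<subseteq> V" unfolding S_def by auto
  have "?R = (\<Prod>a\<in>S. \<Prod>b\<in>V-S. 1 + X a b)" unfolding S_def V_def by simp
  also have "\<dots> = (\<Prod>a\<in>V. \<Prod>b\<in>V. \<phi> a b)"
  proof -
    have inner: "(\<Prod>b\<in>V. \<phi> a b) = (if a \<in> S then (\<Prod>b\<in>V-S. 1 + X a b) else 1)" for a
    proof (cases "a \<in> S")
      case True
      have "(\<Prod>b\<in>V. \<phi> a b) = (\<Prod>b\<in>V. if b \<notin> S then 1 + X a b else 1)"
        unfolding \<phi>_def using True by simp
      also have "\<dots> = (\<Prod>b\<in>{b\<in>V. b \<notin> S}. 1 + X a b)" by (rule prod.inter_filter[OF fV, symmetric])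
      also have "{b\<in>V. b \<notin> S} = V - S" by auto
      finally show ?thesis using True by simp
    qed (simp add: \<phi>_def)
    have "(\<Prod>a\<in>V. \<Prod>b\<in>V. \<phi> a b) = (\<Prod>a\<in>V. if a \<in> S then (\<Prod>b\<in>V-S. 1 + X a b) else 1)"
      using inner by simp
    also have "\<dots> = (\<Prod>a\<in>{a\<in>V. a \<in> S}. \<Prod>b\<in>V-S. 1 + X a b)" by (rule prod.inter_filter[OF fV, symmetric])
    also have "{a\<in>V. a \<in> S} = S" using SV by auto
    finally show ?thesis by simp
  qed
  also have "\<dots> = (\<Prod>(a, b)\<in>V \<times> V. \<phi> a b)" by (rule prod.cartesian_product)
  also have "\<dots> = (\<Prod>(a, b)\<in>D \<union> prod.swap ` D. \<phi> a b)"
  proof (rule prod.mono_neutral_left[symmetric])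
    show "finite (V \<times> V)" using fV by simp
    show "D \<union> prod.swap ` D \<subseteq> V \<times> V" using DV by auto
    show "\<forall>x\<in>V \<times> V - (D \<union> prod.swap ` D). (case x of (a, b) \<Rightarrow> \<phi> a b) = 1"
    proof
      fix x assume x: "x \<in> V \<times> V - (D \<union> prod.swap ` D)"
      obtain a b where ab: "x = (a, b)" by fastforce
      have "a = b"
      proof (rule ccontr)
        assume "a \<noteq> b"
        then have "a < b \<or> b < a" by arith
        then show False using x ab unfolding D_def V_def by (auto simp: image_iff)
      qed
      then show "(case x of (a, b) \<Rightarrow> \<phi> a b) = 1" using ab by (simp add: \<phi>_def)
    qed
  qed
  also have "\<dots> = (\<Prod>(a, b)\<in>D. \<phi> a b) * (\<Prod>(a, b)\<in>prod.swap ` D. \<phi> a b)"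
    by (rule prod.union_disjoint) (use fD in \<open>auto simp: D_def\<close>)
  also have "(\<Prod>(a, b)\<in>prod.swap ` D. \<phi> a b) = (\<Prod>(a, b)\<in>D. \<phi> b a)"
    by (subst prod.reindex) (auto simp: comp_def case_prod_beta)
  also have "(\<Prod>(a, b)\<in>D. \<phi> a b) * (\<Prod>(a, b)\<in>D. \<phi> b a) = (\<Prod>(a, b)\<in>D. \<phi> a b * \<phi> b a)"
    by (simp add: prod.distrib[symmetric] case_prod_beta)
  also have "\<dots> = ?L"
    unfolding D_def[symmetric]
  proof (rule prod.cong[OF refl])
    fix x assume x: "x \<in> D"
    obtain a b where ab: "x = (a, b)" by fastforce
    have ab': "a \<in> V" "b \<in> V" "a \<noteq> b" using x ab unfolding D_def V_def by auto
    have la: "l a = 0 \<or> l a = 1" and lb: "l b = 0 \<or> l b = 1" using l01 ab' unfolding V_def by auto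
    have Sa: "a \<in> S \<longleftrightarrow> l a = 1" and Sb: "b \<in> S \<longleftrightarrow> l b = 1" using ab' unfolding S_def by auto
    show "(case x of (a, b) \<Rightarrow> \<phi> a b * \<phi> b a) = (case x of (i, j) \<Rightarrow> 1 + complex_of_int (int (l i) - int (l j)) * X i j)"
      using la lb Sa Sb ab unfolding \<phi>_def by (auto simp: anti[of a b])
  qed
  finally show ?thesis by simp
qed

theorem lemma1:
  fixes \<nu> :: real and n :: nat and \<theta> :: "nat \<Rightarrow> complex" and p :: "(nat \<Rightarrow> complex) \<Rightarrow> complex"
  assumes "n \<ge> 1"
    and "\<And>i j. 1 \<le> i \<Longrightarrow> i < j \<Longrightarrow> j \<le> n \<Longrightarrow> sinh (\<theta> i - \<theta> j) \<noteq> 0"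
  shows "(\<Sum>l \<in> {1..n} \<rightarrow>\<^sub>E {0, 1::nat}.
            (-1) ^ (\<Sum>k=1..n. l k) *
            (\<Prod>(i, j) \<in> {(i, j). 1 \<le> i \<and> i < j \<and> j \<le> n}.
               1 + (of_int (int (l i) - int (l j))) * (\<i> * of_real (sin (pi * \<nu>)) / sinh (\<theta> i - \<theta> j)))
            * p \<theta>) = 0"
proof -
  define c where "c = \<i> * complex_of_real (sin (pi * \<nu>))"
  define w where "w = (\<lambda>k. exp (\<theta> k))"
  define V where "V = {1..n}"
  have Y: "c / sinh (\<theta> a - \<theta> b) = XX (2 * c) w a b" for a b
    unfolding w_def by (rule c_sinh_XX)
  have K0: "KK (2 * c) w V = 0"
  proof (rule main)
    show "finite V" "V \<noteq> {}" using assms(1) unfolding V_def by auto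
    show "\<forall>a\<in>V. w a \<noteq> 0" unfolding w_def by simp
    show "\<forall>a\<in>V. \<forall>b\<in>V. a \<noteq> b \<longrightarrow> (w a)^2 \<noteq> (w b)^2"
    proof (intro ballI impI)
      fix a b assume ab: "a \<in> V" "b \<in> V" "a \<noteq> b"
      have ne: "sinh (\<theta> a - \<theta> b) \<noteq> 0"
      proof (cases "a < b")
        case True then show ?thesis using assms(2)[of a b] ab unfolding V_def by auto
      next
        case False
        then have "b < a" using ab by arith
        then have "sinh (\<theta> b - \<theta> a) \<noteq> 0" using assms(2)[of b a] ab unfolding V_def by auto
        moreover have "sinh (\<theta> b - \<theta> a) = - sinh (\<theta> a - \<theta> b)"
          by (metis minus_diff_eq sinh_minus)
        ultimately show ?thesis by simp
      qed
      show "(w a)^2 \<noteq> (w b)^2" using ne unfolding w_def sinh_exp_diff by auto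
    qed
  qed
  have "(\<Sum>l \<in> {1..n} \<rightarrow>\<^sub>E {0, 1::nat}.
            (-1) ^ (\<Sum>k=1..n. l k) *
            (\<Prod>(i, j) \<in> {(i, j). 1 \<le> i \<and> i < j \<and> j \<le> n}.
               1 + (of_int (int (l i) - int (l j))) * (\<i> * of_real (sin (pi * \<nu>)) / sinh (\<theta> i - \<theta> j))))
        = KK (2 * c) w V"
    unfolding KK_def
  proof (rule sum.reindex_bij_witness[where j = "\<lambda>l. {k\<in>V. l k = 1}"
        and i = "\<lambda>S k. if k \<in> V then (if k \<in> S then 1 else 0) else undefined"])
    fix l assume l: "l \<in> {1..n} \<rightarrow>\<^sub>E {0, 1::nat}"
    then show "(\<lambda>k. if k \<in> V then (if k \<in> {k\<in>V. l k = 1} then 1 else 0) else undefined) = l"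
      unfolding V_def by (auto simp: fun_eq_iff PiE_def extensional_def Pi_def)
    show "{k\<in>V. l k = 1} \<in> Pow V" by auto
    have l01: "\<And>k. k \<in> {1..n} \<Longrightarrow> l k \<in> {0, 1}" using l by auto
    have l0: "\<And>k. k \<in> {1..n} \<Longrightarrow> l k \<noteq> 1 \<Longrightarrow> l k = 0" using l01 by auto
    have "(\<Sum>k=1..n. l k) = (\<Sum>k\<in>{k\<in>V. l k = 1}. l k)"
      unfolding V_def by (rule sum.mono_neutral_right) (use l0 in auto)
    also have "\<dots> = card {k\<in>V. l k = 1}" by simp
    finally have cs: "(\<Sum>k=1..n. l k) = card {k\<in>V. l k = 1}" .
    show "(-1) ^ card {k\<in>V. l k = 1} * PP (2 * c) w V {k\<in>V. l k = 1} =
       (-1) ^ (\<Sum>k=1..n. l k) *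
            (\<Prod>(i, j) \<in> {(i, j). 1 \<le> i \<and> i < j \<and> j \<le> n}.
               1 + (of_int (int (l i) - int (l j))) * (\<i> * of_real (sin (pi * \<nu>)) / sinh (\<theta> i - \<theta> j)))"
      unfolding cs c_def[symmetric] Y PP_def V_def
      by (rule arg_cong[where f = "\<lambda>x. _ * x"], rule PP_pairs[symmetric, OF l01 XX_antisym])
  next
    fix S assume S: "S \<in> Pow V"
    then show "{k\<in>V. (if k \<in> V then (if k \<in> S then 1 else 0) else undefined) = (1::nat)} = S" by (auto split: if_splits)
    show "(\<lambda>k. if k \<in> V then (if k \<in> S then 1 else 0) else undefined) \<in> {1..n} \<rightarrow>\<^sub>E {0, 1::nat}"
      unfolding V_def using S by (auto split: if_splits)
  qed
  then show ?thesis using K0 by (simp add: sum_distrib_right[symmetric])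
qed

end
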